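(* Let $(a_N)$ be a sequence of positive numbers and, for each $N$, let $P_{N,a_N}$ be the probability on sequences $(n_j)_{j\ge0}$ of nonnegative integers with $\sum_jn_j=N$ given by $P_{N,a_N}((n_j))\propto e^{-a_N\sum_jjn_j}$, with $\langle n_0\rangle_{N,a_N}$ the expectation of $n_0$. Let $\lambda_N=1-m_N/N$ with integers $0\le m_N\le N$. Suppose $\lambda_N\to\lambda>0$ and $\ln N-(1-\frac{\lambda_N}2)Na_N\to\infty$. Then $P_{N,a_N}(n_0/N\ge\lambda_N)\to0$ and $\lim_{N\to\infty}\frac1N\langle n_0\rangle_{N,a_N}\le\lambda$. If $\ln N-Na_N\to\infty$, then $\frac1N\langle n_0\rangle_{N,a_N}\to0$, i.e. there is no Bose–Einstein condensation.
   Context: This is the canonical ensemble of $N$ noninteracting bosons in a one-dimensional harmonic trap, $n_j$ being the occupation of the $j$-th level and $a_N=\beta(\varepsilon_1-\varepsilon_0)$. *)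

theory Defs
  imports "HOL-Analysis.Analysis"
begin

definition configs :: "nat \<Rightarrow> (nat \<Rightarrow> nat) set" where
  "configs N = {n. finite {j. n j \<noteq> 0} \<and> (\<Sum>j\<in>{j. n j \<noteq> 0}. n j) = N}"

definition energy :: "(nat \<Rightarrow> nat) \<Rightarrow> nat" where
  "energy n = (\<Sum>j\<in>{j. n j \<noteq> 0}. j * n j)"

definition boltz :: "real \<Rightarrow> (nat \<Rightarrow> nat) \<Rightarrow> real" where
  "boltz a n = exp (- a * real (energy n))"

definition partfun :: "nat \<Rightarrow> real \<Rightarrow> real" where
  "partfun N a = infsum (boltz a) (configs N)"

definition canon_prob :: "nat \<Rightarrow> real \<Rightarrow> ((nat \<Rightarrow> nat) \<Rightarrow> bool) \<Rightarrow> real" where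
  "canon_prob N a A = infsum (boltz a) {n \<in> configs N. A n} / partfun N a"

definition mean_n0 :: "nat \<Rightarrow> real \<Rightarrow> real" where
  "mean_n0 N a = infsum (\<lambda>n. real (n 0) * boltz a n) (configs N) / partfun N a"

end

theory Submission imports Defs begin


lemma sum_supp:
  assumes "finite S" "{j. n j \<noteq> 0} \<subseteq> S" "\<And>j. f j 0 = 0"
  shows "(\<Sum>j\<in>{j. n j \<noteq> 0}. f j (n j)) = (\<Sum>j\<in>S. f j (n j))"
  by (rule sum.mono_neutral_left) (use assms in auto)

lemma configsI:
  assumes "finite S" "{j. n j \<noteq> 0} \<subseteq> S" "sum n S = N"
  shows "n \<in> configs N"
proof -
  have "finite {j. n j \<noteq> 0}" using assms finite_subset by blast
  moreover have "(\<Sum>j\<in>{j. n j \<noteq> 0}. n j) = sum n S"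
    using sum_supp[OF assms(1,2), of "\<lambda>j x. x"] by simp
  ultimately show ?thesis using assms unfolding configs_def by simp
qed

lemma configsD:
  assumes "n \<in> configs N" "finite S" "{j. n j \<noteq> 0} \<subseteq> S"
  shows "sum n S = N"
  using assms sum_supp[OF assms(2,3), of "\<lambda>j x. x"] unfolding configs_def by simp

lemma configs_fin: "n \<in> configs N \<Longrightarrow> finite {j. n j \<noteq> 0}"
  unfolding configs_def by simp

lemma energy_eq:
  assumes "finite S" "{j. n j \<noteq> 0} \<subseteq> S"
  shows "energy n = (\<Sum>j\<in>S. j * n j)"
  unfolding energy_def using sum_supp[OF assms, of "\<lambda>j x. j * x"] by simp

lemma configs_le: "n \<in> configs N \<Longrightarrow> n j \<le> N"
proof -
  assume h: "n \<in> configs N"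
  show "n j \<le> N"
  proof (cases "n j = 0")
    case False
    then have "n j \<le> (\<Sum>i\<in>{j. n j \<noteq> 0}. n i)"
      using configs_fin[OF h] by (intro member_le_sum) auto
    then show ?thesis using h unfolding configs_def by simp
  qed simp
qed

lemma energy_ge: "n \<in> configs N \<Longrightarrow> j * n j \<le> energy n"
proof -
  assume h: "n \<in> configs N"
  show "j * n j \<le> energy n"
  proof (cases "n j = 0")
    case False
    then show ?thesis unfolding energy_def
      using configs_fin[OF h] by (intro member_le_sum) auto
  qed simp
qed

lemma finite_trunc: "finite {n \<in> configs N. energy n \<le> B}"
proof (rule finite_subset)
  show "{n \<in> configs N. energy n \<le> B} \<subseteq>
     {f. \<forall>x. (x \<in> {0..B} \<longrightarrow> f x \<in> {0..N}) \<and> (x \<notin> {0..B} \<longrightarrow> f x = 0)}"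
  proof (safe)
    fix n x assume h: "n \<in> configs N" "energy n \<le> B"
    show "n x \<in> {0..N}" using configs_le[OF h(1)] by simp
    assume "x \<notin> {0..B}"
    then have "x > B" by simp
    show "n x = 0"
    proof (rule ccontr)
      assume "n x \<noteq> 0"
      then have "x \<le> x * n x" by simp
      also have "\<dots> \<le> energy n" by (rule energy_ge[OF h(1)])
      finally show False using h(2) \<open>x > B\<close> by simp
    qed
  qed
qed (rule finite_set_of_finite_funs; simp)


definition addk :: "nat \<Rightarrow> (nat \<Rightarrow> nat) \<Rightarrow> (nat \<Rightarrow> nat)" where
  "addk k m = m(0 := m 0 + k)"

lemma addk_props:
  assumes "m \<in> configs M"
  shows "addk k m \<in> configs (M + k)" "energy (addk k m) = energy m"
proof -
  let ?S = "insert 0 {j. m j \<noteq> 0}"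
  have fS: "finite ?S" using configs_fin[OF assms] by simp
  have sub1: "{j. addk k m j \<noteq> 0} \<subseteq> ?S" "{j. m j \<noteq> 0} \<subseteq> ?S" by (auto simp: addk_def)
  have "sum (addk k m) ?S = addk k m 0 + sum (addk k m) (?S - {0})"
    using fS by (intro sum.remove) auto
  also have "sum (addk k m) (?S - {0}) = sum m (?S - {0})"
    by (rule sum.cong) (auto simp: addk_def)
  also have "addk k m 0 + sum m (?S - {0}) = sum m ?S + k"
    using fS by (simp add: sum.insert_remove addk_def)
  also have "sum m ?S = M" using configsD[OF assms fS sub1(2)] .
  finally show "addk k m \<in> configs (M + k)" by (intro configsI[OF fS sub1(1)]) simp
  have "energy (addk k m) = (\<Sum>j\<in>?S. j * addk k m j)" by (rule energy_eq[OF fS sub1(1)])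
  also have "\<dots> = (\<Sum>j\<in>?S. j * m j)" by (rule sum.cong) (auto simp: addk_def)
  also have "\<dots> = energy m" by (rule energy_eq[OF fS sub1(2), symmetric])
  finally show "energy (addk k m) = energy m" .
qed

lemma addk_bij:
  "bij_betw (addk k) (configs M) {n \<in> configs (M + k). k \<le> n 0}"
proof (rule bij_betw_byWitness[where f' = "\<lambda>n. n(0 := n 0 - k)"])
  show "\<forall>a\<in>configs M. (addk k a)(0 := addk k a 0 - k) = a" by (auto simp: addk_def)
  show "\<forall>a'\<in>{n \<in> configs (M + k). k \<le> n 0}. addk k (a'(0 := a' 0 - k)) = a'"
    by (auto simp: addk_def)
  show "addk k ` configs M \<subseteq> {n \<in> configs (M + k). k \<le> n 0}"
    using addk_props by (auto simp: addk_def)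
  show "(\<lambda>n. n(0 := n 0 - k)) ` {n \<in> configs (M + k). k \<le> n 0} \<subseteq> configs M"
  proof safe
    fix n assume h: "n \<in> configs (M + k)" "k \<le> n 0"
    let ?m = "n(0 := n 0 - k)"
    have "addk k ?m = n" using h by (auto simp: addk_def)
    let ?S = "insert 0 {j. n j \<noteq> 0}"
    have fS: "finite ?S" using configs_fin[OF h(1)] by simp
    have sub: "{j. ?m j \<noteq> 0} \<subseteq> ?S" "{j. n j \<noteq> 0} \<subseteq> ?S" by auto
    have "sum n ?S = n 0 + sum n (?S - {0})" using fS by (intro sum.remove) auto
    moreover have "sum ?m ?S = ?m 0 + sum ?m (?S - {0})" using fS by (intro sum.remove) auto
    moreover have "sum ?m (?S - {0}) = sum n (?S - {0})" by (rule sum.cong) auto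
    moreover have "sum n ?S = M + k" using configsD[OF h(1) fS sub(2)] .
    ultimately have "sum ?m ?S = M" using h(2) by simp
    then show "?m \<in> configs M" by (rule configsI[OF fS sub(1)])
  qed
qed


definition shiftc :: "(nat \<Rightarrow> nat) \<Rightarrow> (nat \<Rightarrow> nat)" where
  "shiftc m = case_nat 0 m"

lemma shiftc_props:
  assumes "m \<in> configs M"
  shows "shiftc m \<in> configs M" "energy (shiftc m) = energy m + M" "shiftc m 0 = 0"
proof -
  let ?S = "Suc ` {j. m j \<noteq> 0}"
  have f0: "finite {j. m j \<noteq> 0}" using configs_fin[OF assms] .
  have fS: "finite ?S" using f0 by simp
  have sub: "{j. shiftc m j \<noteq> 0} \<subseteq> ?S"
  proof
    fix x assume "x \<in> {j. shiftc m j \<noteq> 0}"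
    then show "x \<in> ?S" by (cases x) (auto simp: shiftc_def)
  qed
  have "sum (shiftc m) ?S = sum (shiftc m \<circ> Suc) {j. m j \<noteq> 0}" by (simp add: sum.reindex)
  also have "\<dots> = M" using assms unfolding configs_def by (simp add: shiftc_def o_def)
  finally show "shiftc m \<in> configs M" by (rule configsI[OF fS sub])
  have "energy (shiftc m) = (\<Sum>j\<in>?S. j * shiftc m j)" by (rule energy_eq[OF fS sub])
  also have "\<dots> = (\<Sum>j\<in>{j. m j \<noteq> 0}. Suc j * m j)" by (simp add: sum.reindex shiftc_def)
  also have "\<dots> = energy m + (\<Sum>j\<in>{j. m j \<noteq> 0}. m j)" by (simp add: energy_def sum.distrib)
  also have "\<dots> = energy m + M" using assms unfolding configs_def by simp
  finally show "energy (shiftc m) = energy m + M" .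
  show "shiftc m 0 = 0" by (simp add: shiftc_def)
qed

lemma shiftc_inj: "inj shiftc"
proof (rule injI)
  fix x y assume "shiftc x = shiftc y"
  then have "\<And>j. shiftc x (Suc j) = shiftc y (Suc j)" by simp
  then show "x = y" by (auto simp: shiftc_def)
qed

lemma shiftc_image: "shiftc ` configs M = {n \<in> configs M. n 0 = 0}"
proof safe
  fix n assume h: "n \<in> configs M" "n 0 = 0"
  let ?m = "\<lambda>j. n (Suc j)"
  have e: "shiftc ?m = n"
  proof
    fix j show "shiftc ?m j = n j" using h(2) by (cases j) (auto simp: shiftc_def)
  qed
  have f: "finite {j. ?m j \<noteq> 0}"
  proof -
    have "{j. ?m j \<noteq> 0} = Suc -` {j. n j \<noteq> 0}" by auto
    then show ?thesis using finite_vimageI[OF configs_fin[OF h(1)] inj_Suc] by simp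
  qed
  have "{j. n j \<noteq> 0} = Suc ` {j. ?m j \<noteq> 0}"
  proof (rule set_eqI)
    fix x show "x \<in> {j. n j \<noteq> 0} \<longleftrightarrow> x \<in> Suc ` {j. ?m j \<noteq> 0}"
      using h(2) by (cases x) auto
  qed
  then have "(\<Sum>j\<in>{j. ?m j \<noteq> 0}. ?m j) = M"
    using h(1) unfolding configs_def by (simp add: sum.reindex o_def)
  then have "?m \<in> configs M" using f unfolding configs_def by simp
  then show "n \<in> shiftc ` configs M" using e by force
qed (use shiftc_props in blast)+



lemma boltz_pos: "boltz a n > 0" by (simp add: boltz_def)

lemma boltz_shiftc:
  assumes "m \<in> configs M"
  shows "boltz a (shiftc m) = exp (- a * M) * boltz a m"
proof -
  have "boltz a (shiftc m) = exp (- a * real (energy m + M))"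
    by (simp only: boltz_def shiftc_props(2)[OF assms])
  also have "- a * real (energy m + M) = - a * M + - a * energy m"
    by (simp add: algebra_simps)
  finally show ?thesis by (simp only: exp_add boltz_def)
qed

lemma boltz_addk: "m \<in> configs M \<Longrightarrow> boltz a (addk k m) = boltz a m"
  by (simp add: boltz_def addk_props(2))

lemma sum_addk:
  assumes "boltz a summable_on configs M"
  shows "boltz a summable_on {n \<in> configs (M + k). k \<le> n 0}"
        "infsum (boltz a) {n \<in> configs (M + k). k \<le> n 0} = partfun M a"
proof -
  have "(\<lambda>m. boltz a (addk k m)) summable_on configs M"
    using assms by (subst summable_on_cong[where g = "boltz a"]) (auto simp: boltz_addk)
  then show "boltz a summable_on {n \<in> configs (M + k). k \<le> n 0}"
    using summable_on_reindex_bij_betw[OF addk_bij] by blast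
  have "infsum (boltz a) {n \<in> configs (M + k). k \<le> n 0} = infsum (\<lambda>m. boltz a (addk k m)) (configs M)"
    by (rule infsum_reindex_bij_betw[OF addk_bij, symmetric])
  also have "\<dots> = partfun M a" unfolding partfun_def
    by (rule infsum_cong) (simp add: boltz_addk)
  finally show "infsum (boltz a) {n \<in> configs (M + k). k \<le> n 0} = partfun M a" .
qed

lemma configs0: "configs 0 = {\<lambda>_. 0}"
proof safe
  fix n assume h: "n \<in> configs 0"
  show "n = (\<lambda>_. 0)"
  proof
    fix j show "n j = 0" using configs_le[OF h, of j] by simp
  qed
next
  show "(\<lambda>_. 0) \<in> configs 0" unfolding configs_def by simp
qed


lemma summable_configs:
  assumes "a > 0"
  shows "boltz a summable_on configs N"
proof (induction N)
  case 0
  then show ?case by (simp add: configs0)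
next
  case (Suc N)
  define q where "q = exp (- a * real (Suc N))"
  have q: "0 < q" "q < 1" using assms by (auto simp: q_def)
  define A1 where "A1 = {n \<in> configs (N + 1). 1 \<le> n 0}"
  have sA1: "boltz a summable_on A1" "infsum (boltz a) A1 = partfun N a"
    using sum_addk[OF Suc.IH, of 1] by (auto simp: A1_def)
  define C where "C = partfun N a"
  have G: "sum (boltz a) {n \<in> configs (Suc N). energy n \<le> B} \<le> C / (1 - q)" for B
  proof -
    let ?G = "{n \<in> configs (Suc N). energy n \<le> B}"
    have fG: "finite ?G" by (rule finite_trunc)
    have "sum (boltz a) ?G = sum (boltz a) (?G \<inter> A1) + sum (boltz a) (?G - A1)"
      by (rule sum.Int_Diff[OF fG])
    also have "sum (boltz a) (?G \<inter> A1) \<le> C"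
      unfolding C_def sA1(2)[symmetric]
      by (rule finite_sum_le_infsum) (use sA1 fG in \<open>auto simp: boltz_pos less_imp_le\<close>)
    also have "sum (boltz a) (?G - A1) \<le> sum (boltz a) (shiftc ` ?G)"
    proof (rule sum_mono2)
      show "finite (shiftc ` ?G)" using fG by simp
      show "?G - A1 \<subseteq> shiftc ` ?G"
      proof
        fix n assume n: "n \<in> ?G - A1"
        then have "n \<in> {n \<in> configs (Suc N). n 0 = 0}" by (auto simp: A1_def)
        then obtain m where m: "m \<in> configs (Suc N)" "n = shiftc m"
          using shiftc_image by blast
        have "energy m \<le> B" using n m shiftc_props(2)[OF m(1)] by simp
        then show "n \<in> shiftc ` ?G" using m by auto
      qed
    qed (simp add: boltz_pos less_imp_le)
    also have "sum (boltz a) (shiftc ` ?G) = q * sum (boltz a) ?G"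
    proof -
      have "sum (boltz a) (shiftc ` ?G) = sum (boltz a \<circ> shiftc) ?G"
        by (rule sum.reindex[OF inj_on_subset[OF shiftc_inj subset_UNIV]])
      also have "\<dots> = sum (\<lambda>m. q * boltz a m) ?G"
      proof (rule sum.cong[OF refl])
        fix m assume "m \<in> ?G"
        then have "m \<in> configs (Suc N)" by simp
        then show "(boltz a \<circ> shiftc) m = q * boltz a m"
          unfolding q_def o_def by (rule boltz_shiftc)
      qed
      finally show ?thesis by (simp add: sum_distrib_left)
    qed
    finally have "(1 - q) * sum (boltz a) ?G \<le> C" by (simp add: algebra_simps)
    then show ?thesis using q by (simp add: field_simps)
  qed
  show ?case
  proof (rule nonneg_bdd_above_summable_on)
    show "bdd_above (sum (boltz a) ` {F. F \<subseteq> configs (Suc N) \<and> finite F})"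
    proof (rule bdd_aboveI2)
      fix F assume F: "F \<in> {F. F \<subseteq> configs (Suc N) \<and> finite F}"
      define B where "B = Max (insert 0 (energy ` F))"
      have "F \<subseteq> {n \<in> configs (Suc N). energy n \<le> B}"
      proof
        fix n assume "n \<in> F"
        then have "energy n \<le> B" unfolding B_def using F by (intro Max_ge) auto
        then show "n \<in> {n \<in> configs (Suc N). energy n \<le> B}" using F \<open>n \<in> F\<close> by auto
      qed
      then have "sum (boltz a) F \<le> sum (boltz a) {n \<in> configs (Suc N). energy n \<le> B}"
        by (intro sum_mono2 finite_trunc) (auto simp: boltz_pos less_imp_le)
      then show "sum (boltz a) F \<le> C / (1 - q)" using G[of B] by linarith
    qed
  qed (simp add: boltz_pos less_imp_le)
qed


lemma partfun_rec:
  assumes "a > 0"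
  shows "partfun (Suc N) a = partfun N a + exp (- a * real (Suc N)) * partfun (Suc N) a"
proof -
  define A1 where "A1 = {n \<in> configs (N + 1). 1 \<le> n 0}"
  have sA1: "infsum (boltz a) A1 = partfun N a"
    using sum_addk[OF summable_configs[OF assms], of N 1] by (auto simp: A1_def)
  have e: "configs (Suc N) = A1 \<union> shiftc ` configs (Suc N)"
    unfolding shiftc_image A1_def by auto
  have d: "A1 \<inter> shiftc ` configs (Suc N) = {}"
    unfolding shiftc_image A1_def by auto
  have S: "boltz a summable_on configs (Suc N)" by (rule summable_configs[OF assms])
  have S1: "boltz a summable_on A1" "boltz a summable_on shiftc ` configs (Suc N)"
    using e by (auto intro: summable_on_subset_banach[OF S])
  have "partfun (Suc N) a = infsum (boltz a) (A1 \<union> shiftc ` configs (Suc N))"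
    unfolding partfun_def using e by simp
  also have "\<dots> = infsum (boltz a) A1 + infsum (boltz a) (shiftc ` configs (Suc N))"
    by (rule infsum_Un_disjoint[OF S1 d])
  also have "infsum (boltz a) (shiftc ` configs (Suc N)) =
      infsum (\<lambda>m. exp (- a * real (Suc N)) * boltz a m) (configs (Suc N))"
  proof -
    have "infsum (boltz a) (shiftc ` configs (Suc N)) = infsum (boltz a \<circ> shiftc) (configs (Suc N))"
      by (rule infsum_reindex[OF inj_on_subset[OF shiftc_inj subset_UNIV]])
    also have "\<dots> = infsum (\<lambda>m. exp (- a * real (Suc N)) * boltz a m) (configs (Suc N))"
    proof (rule infsum_cong)
      fix m assume "m \<in> configs (Suc N)"
      then show "(boltz a \<circ> shiftc) m = exp (- a * real (Suc N)) * boltz a m"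
        unfolding o_def by (rule boltz_shiftc)
    qed
    finally show ?thesis .
  qed
  also have "\<dots> = exp (- a * real (Suc N)) * partfun (Suc N) a"
    unfolding partfun_def by (rule infsum_cmult_right')
  finally show ?thesis using sA1 by simp
qed


lemma partfun0: "partfun 0 a = 1"
  by (simp add: partfun_def configs0 boltz_def energy_def)

lemma partfun_step:
  assumes "a > 0"
  shows "partfun N a = partfun (Suc N) a * (1 - exp (- a * real (Suc N)))"
  using partfun_rec[OF assms, of N] by (simp add: algebra_simps)

lemma partfun_pos:
  assumes "a > 0"
  shows "partfun N a > 0"
proof (induction N)
  case 0 then show ?case by (simp add: partfun0)
next
  case (Suc N)
  have "exp (- a * real (Suc N)) < 1" using assms by simp
  then show ?case using Suc partfun_step[OF assms, of N]
    by (metis diff_gt_0_iff_gt zero_less_mult_pos2)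
qed

lemma partfun_mono:
  assumes "a > 0" "M \<le> N"
  shows "partfun M a \<le> partfun N a"
  using assms(2)
proof (induction N)
  case 0 then show ?case by simp
next
  case (Suc N)
  have h: "partfun N a \<le> partfun (Suc N) a"
    using partfun_step[OF assms(1), of N] partfun_pos[OF assms(1), of "Suc N"]
    by (simp add: mult_left_le)
  show ?case
  proof (cases "M = Suc N")
    case False then show ?thesis using Suc h by linarith
  qed simp
qed

lemma partfun_ratio:
  assumes "a > 0" "d \<le> h"
  shows "partfun (h - d) a \<le> partfun h a * (1 - exp (- a * h)) ^ d"
  using assms(2)
proof (induction d)
  case 0 then show ?case by simp
next
  case (Suc d)
  have "partfun (h - Suc d) a = partfun (h - d) a * (1 - exp (- a * real (h - d)))"
    using partfun_step[OF assms(1), of "h - Suc d"] Suc.prems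
    by (simp add: Suc_diff_Suc)
  also have "\<dots> \<le> partfun (h - d) a * (1 - exp (- a * h))"
    using partfun_pos[OF assms(1), of "h - d"] assms(1)
    by (intro mult_left_mono) auto
  also have "\<dots> \<le> partfun h a * (1 - exp (- a * h)) ^ d * (1 - exp (- a * h))"
    using Suc assms(1) by (intro mult_right_mono) auto
  finally show ?case by (simp add: mult_ac)
qed



lemma prob_eq:
  assumes "m \<le> N" "N > 0"
  shows "canon_prob N a (\<lambda>n. real (n 0) / real N \<ge> 1 - real m / real N)
       = infsum (boltz a) {n \<in> configs (m + (N - m)). N - m \<le> n 0} / partfun N a"
proof -
  have "{n \<in> configs N. real (n 0) / real N \<ge> 1 - real m / real N} =
        {n \<in> configs (m + (N - m)). N - m \<le> n 0}"
  proof -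
    have "real (k) / real N \<ge> 1 - real m / real N \<longleftrightarrow> N - m \<le> k" for k
    proof -
      have eq: "1 - real m / real N = (real N - real m) / real N" using assms by (simp add: field_simps)
      have "real k / real N \<ge> 1 - real m / real N \<longleftrightarrow> real N - real m \<le> real k"
        unfolding eq using assms by (simp add: divide_le_cancel)
      also have "\<dots> \<longleftrightarrow> real N \<le> real (k + m)" unfolding of_nat_add by linarith
      also have "\<dots> \<longleftrightarrow> N \<le> k + m" by (simp only: of_nat_le_iff)
      also have "\<dots> \<longleftrightarrow> N - m \<le> k" using assms by arith
      finally show ?thesis .
    qed
    then show ?thesis using assms by auto
  qed
  then show ?thesis unfolding canon_prob_def by simp
qed

lemma prob_eq2:
  assumes "a > 0" "m \<le> N" "N > 0"
  shows "canon_prob N a (\<lambda>n. real (n 0) / real N \<ge> 1 - real m / real N)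
       = partfun m a / partfun N a"
  using prob_eq[OF assms(2,3)] sum_addk(2)[OF summable_configs[OF assms(1)]] by simp

lemma one_minus_le_exp: "1 - x \<le> exp (- x :: real)"
  using exp_ge_add_one_self[of "-x"] by simp

lemma prob_bound:
  assumes "a > 0" "m \<le> N"
  defines "h \<equiv> (N + m) div 2"
  shows "partfun m a / partfun N a \<le> exp (- (real (h - m) * exp (- a * h)))"
proof -
  have mh: "m \<le> h" "h \<le> N" using assms(2) by (auto simp: h_def)
  define q where "q = exp (- a * h)"
  have q: "0 < q" "q \<le> 1" using assms(1) by (auto simp: q_def)
  have "partfun m a = partfun (h - (h - m)) a" using mh by simp
  also have "\<dots> \<le> partfun h a * (1 - q) ^ (h - m)"
    unfolding q_def by (rule partfun_ratio[OF assms(1)]) simp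
  also have "\<dots> \<le> partfun N a * (1 - q) ^ (h - m)"
    using q partfun_mono[OF assms(1) mh(2)] by (intro mult_right_mono) auto
  also have "(1 - q) ^ (h - m) \<le> exp (- q) ^ (h - m)"
    using q one_minus_le_exp[of q] by (intro power_mono) auto
  also have "exp (- q) ^ (h - m) = exp (- (real (h - m) * q))"
    by (simp add: exp_of_nat_mult[symmetric])
  finally show ?thesis using partfun_pos[OF assms(1), of N]
    by (simp add: q_def field_simps mult.commute)
qed

lemma mean_bound:
  assumes "a > 0" "m \<le> N" "N > 0"
  shows "mean_n0 N a / real N \<le> (1 - real m / real N) + partfun m a / partfun N a"
proof -
  define f where "f = (\<lambda>n. real (n 0) * boltz a n)"
  define E where "E = {n \<in> configs (m + (N - m)). N - m \<le> n 0}"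
  define D where "D = configs N - E"
  have S: "boltz a summable_on configs N" by (rule summable_configs[OF assms(1)])
  have fS: "f summable_on configs N"
    by (rule summable_on_comparison_test[OF summable_on_cmult_right[OF S, of "real N"]])
       (auto simp: f_def boltz_pos less_imp_le configs_le intro!: mult_right_mono)
  have EC: "E \<subseteq> configs N" using assms by (auto simp: E_def)
  have un: "configs N = E \<union> D" "E \<inter> D = {}" using EC by (auto simp: D_def)
  have "infsum f (configs N) = infsum f E + infsum f D"
    by (subst un(1), rule infsum_Un_disjoint[OF _ _ un(2)];
        rule summable_on_subset_banach[OF fS]) (use un in auto)
  also have "infsum f E \<le> infsum (\<lambda>n. real N * boltz a n) E"
    by (rule infsum_mono[OF summable_on_subset_banach[OF fS EC]
          summable_on_cmult_right[OF summable_on_subset_banach[OF S EC]]])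
       (use EC in \<open>auto simp: f_def boltz_pos less_imp_le configs_le intro!: mult_right_mono\<close>)
  also have "\<dots> = real N * partfun m a"
    unfolding infsum_cmult_right' E_def
    using sum_addk(2)[OF summable_configs[OF assms(1)]] by simp
  also have "infsum f D \<le> infsum (\<lambda>n. real (N - m) * boltz a n) D"
    by (rule infsum_mono[OF summable_on_subset_banach[OF fS] summable_on_cmult_right[OF
          summable_on_subset_banach[OF S]]])
       (auto simp: D_def E_def f_def boltz_pos less_imp_le assms intro!: mult_right_mono)
  also have "\<dots> \<le> real (N - m) * partfun N a"
    unfolding infsum_cmult_right' partfun_def
    by (intro mult_left_mono infsum_mono2[OF summable_on_subset_banach[OF S] S])
       (auto simp: D_def boltz_pos less_imp_le)
  finally have "infsum f (configs N) \<le> real N * partfun m a + real (N - m) * partfun N a" by simp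
  then have "mean_n0 N a \<le> real N * (partfun m a / partfun N a) + real (N - m)"
    using partfun_pos[OF assms(1), of N]
    unfolding mean_n0_def f_def[symmetric] by (simp add: field_simps)
  then show ?thesis using assms(2,3) by (simp add: field_simps of_nat_diff)
qed


lemma part1:
  fixes a :: "nat \<Rightarrow> real" and m :: "nat \<Rightarrow> nat" and lam :: real
  assumes apos: "\<And>N. a N > 0"
    and mle: "\<forall>N. m N \<le> N"
    and lim: "(\<lambda>N. 1 - real (m N) / real N) \<longlonglongrightarrow> lam" and lpos: "lam > 0"
    and Lt: "filterlim (\<lambda>N. ln (real N) - (1 - (1 - real (m N) / real N) / 2) * real N * a N)
              at_top sequentially"
  shows "((\<lambda>N. canon_prob N (a N)
                 (\<lambda>n. real (n 0) / real N \<ge> 1 - real (m N) / real N)) \<longlonglongrightarrow> 0)"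
        "limsup (\<lambda>N. ereal (mean_n0 N (a N) / real N)) \<le> ereal lam"
proof -
  define lN where "lN = (\<lambda>N. 1 - real (m N) / real N)"
  define L where "L = (\<lambda>N. ln (real N) - (1 - lN N / 2) * real N * a N)"
  define u where "u = (\<lambda>N. (lN N - 1 / real N) / 2)"
  define P where "P = (\<lambda>N. canon_prob N (a N) (\<lambda>n. real (n 0) / real N \<ge> 1 - real (m N) / real N))"
  have ulim0: "u \<longlonglongrightarrow> (lam - 0) / 2"
    unfolding u_def
    by (intro tendsto_divide tendsto_diff tendsto_const) (use lim lim_1_over_n in \<open>auto simp: lN_def\<close>)
  then have ulim: "u \<longlonglongrightarrow> lam / 2" by simp
  have wlim: "filterlim (\<lambda>N. u N * exp (L N)) at_top sequentially"
    by (rule filterlim_tendsto_pos_mult_at_top[OF ulim])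
       (use lpos filterlim_compose[OF exp_at_top Lt] in \<open>auto simp: L_def lN_def\<close>)
  have elim: "(\<lambda>N. exp (- (u N * exp (L N)))) \<longlonglongrightarrow> 0"
    using filterlim_compose[OF exp_at_bot iffD1[OF filterlim_uminus_at_top wlim]] by simp
  have Peq: "P N = partfun (m N) (a N) / partfun N (a N)" if "N > 0" for N
    unfolding P_def using prob_eq2[OF apos] mle that by simp
  have Pub: "P N \<le> exp (- (u N * exp (L N)))" if N: "N > 0" for N
  proof -
    define h where "h = (N + m N) div 2"
    have mN: "m N \<le> N" using mle by simp
    have h1: "N + m N \<le> 2 * h + 1" "2 * h \<le> N + m N" by (auto simp: h_def)
    have hm: "m N \<le> h" using mN by (auto simp: h_def)
    have r1: "real N * u N \<le> real (h - m N)"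
    proof -
      have "real N * u N = (real N - real (m N) - 1) / 2"
        using N by (simp add: u_def lN_def field_simps)
      also have "\<dots> \<le> real (h - m N)" using h1 hm by (simp add: of_nat_diff) 
      finally show ?thesis .
    qed
    have eL: "exp (L N) = real N * exp (- ((real N + real (m N)) / 2 * a N))"
    proof -
      have "L N = ln (real N) + (- ((real N + real (m N)) / 2 * a N))"
        using N by (simp add: L_def lN_def field_simps)
      then show ?thesis using N by (simp only: exp_add exp_ln of_nat_0_less_iff)
    qed
    have r2: "exp (- ((real N + real (m N)) / 2 * a N)) \<le> exp (- a N * h)"
    proof -
      have "real (2 * h) \<le> real (N + m N)" by (simp only: of_nat_le_iff h1(2))
      then have "real h \<le> (real N + real (m N)) / 2" by simp
      then show ?thesis using apos[of N] by (simp add: mult_left_mono)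
    qed
    have key: "u N * exp (L N) \<le> real (h - m N) * exp (- a N * h)"
    proof (cases "u N \<ge> 0")
      case True
      have "u N * exp (L N) = (real N * u N) * exp (- ((real N + real (m N)) / 2 * a N))"
        by (simp add: eL)
      also have "\<dots> \<le> real (h - m N) * exp (- a N * h)"
        using r1 r2 True by (intro mult_mono) auto
      finally show ?thesis .
    next
      case False
      then have "u N * exp (L N) \<le> 0" by (simp add: mult_nonpos_nonneg)
      also have "0 \<le> real (h - m N) * exp (- a N * h)" by simp
      finally show ?thesis .
    qed
    have "P N \<le> exp (- (real (h - m N) * exp (- a N * h)))"
      using Peq[OF N] prob_bound[OF apos mN] by (simp add: h_def)
    also have "\<dots> \<le> exp (- (u N * exp (L N)))" using key by simp
    finally show ?thesis .
  qed
  have Pnn: "0 \<le> P N" for N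
    unfolding P_def canon_prob_def
    using partfun_pos[OF apos, of N]
    by (intro divide_nonneg_pos infsum_nonneg) (auto simp: boltz_pos less_imp_le)
  have Plim: "P \<longlonglongrightarrow> 0"
    by (rule tendsto_sandwich[OF _ _ tendsto_const elim])
       (use Pnn eventually_mono[OF eventually_gt_at_top[of 0] Pub] in auto)
  then show "((\<lambda>N. canon_prob N (a N)
                 (\<lambda>n. real (n 0) / real N \<ge> 1 - real (m N) / real N)) \<longlonglongrightarrow> 0)"
    unfolding P_def .
  have "limsup (\<lambda>N. ereal (mean_n0 N (a N) / real N)) \<le> limsup (\<lambda>N. ereal (lN N + P N))"
  proof (rule Limsup_mono)
    show "\<forall>\<^sub>F N in sequentially. ereal (mean_n0 N (a N) / real N) \<le> ereal (lN N + P N)"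
      using eventually_gt_at_top[of 0]
    proof eventually_elim
      case (elim N)
      then show ?case using mean_bound[OF apos, of "m N" N] mle Peq[OF elim]
        by (simp add: lN_def)
    qed
  qed
  also have "limsup (\<lambda>N. ereal (lN N + P N)) = ereal (lam + 0)"
  proof (rule lim_imp_Limsup)
    have "(\<lambda>N. lN N + P N) \<longlonglongrightarrow> lam + 0"
      by (rule tendsto_add) (use lim Plim in \<open>simp_all add: lN_def\<close>)
    then show "(\<lambda>N. ereal (lN N + P N)) \<longlonglongrightarrow> ereal (lam + 0)" by (simp only: lim_ereal)
  qed simp
  finally show "limsup (\<lambda>N. ereal (mean_n0 N (a N) / real N)) \<le> ereal lam" by simp
qed


theorem proposition2:
  fixes a :: "nat \<Rightarrow> real"
  assumes apos: "\<And>N. a N > 0"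
  shows "(\<forall>(m :: nat \<Rightarrow> nat) (lam :: real).
            (\<forall>N. m N \<le> N) \<and>
            ((\<lambda>N. 1 - real (m N) / real N) \<longlonglongrightarrow> lam) \<and> lam > 0 \<and>
            filterlim (\<lambda>N. ln (real N) - (1 - (1 - real (m N) / real N) / 2) * real N * a N)
              at_top sequentially
          \<longrightarrow>
            ((\<lambda>N. canon_prob N (a N)
                 (\<lambda>n. real (n 0) / real N \<ge> 1 - real (m N) / real N)) \<longlonglongrightarrow> 0) \<and>
            limsup (\<lambda>N. ereal (mean_n0 N (a N) / real N)) \<le> ereal lam)
       \<and>
         (filterlim (\<lambda>N. ln (real N) - real N * a N) at_top sequentially
          \<longrightarrow> ((\<lambda>N. mean_n0 N (a N) / real N) \<longlonglongrightarrow> 0))"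
proof (intro conjI allI impI)
  fix m :: "nat \<Rightarrow> nat" and lam :: real
  assume h: "(\<forall>N. m N \<le> N) \<and>
            ((\<lambda>N. 1 - real (m N) / real N) \<longlonglongrightarrow> lam) \<and> lam > 0 \<and>
            filterlim (\<lambda>N. ln (real N) - (1 - (1 - real (m N) / real N) / 2) * real N * a N)
              at_top sequentially"
  then show "((\<lambda>N. canon_prob N (a N)
                 (\<lambda>n. real (n 0) / real N \<ge> 1 - real (m N) / real N)) \<longlonglongrightarrow> 0)"
            "limsup (\<lambda>N. ereal (mean_n0 N (a N) / real N)) \<le> ereal lam"
  proof -
    have h1: "\<forall>N. m N \<le> N" using h by blast
    have h2: "(\<lambda>N. 1 - real (m N) / real N) \<longlonglongrightarrow> lam" using h by blast
    have h3: "lam > 0" using h by blast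
    have h4: "filterlim (\<lambda>N. ln (real N) - (1 - (1 - real (m N) / real N) / 2) * real N * a N)
              at_top sequentially" using h by blast
    show "((\<lambda>N. canon_prob N (a N)
                 (\<lambda>n. real (n 0) / real N \<ge> 1 - real (m N) / real N)) \<longlonglongrightarrow> 0)"
            "limsup (\<lambda>N. ereal (mean_n0 N (a N) / real N)) \<le> ereal lam"
      by (rule part1[OF apos h1 h2 h3 h4])+
  qed
next
  assume Lt: "filterlim (\<lambda>N. ln (real N) - real N * a N) at_top sequentially"
  define X where "X = (\<lambda>N. mean_n0 N (a N) / real N)"
  have ls: "limsup (\<lambda>N. ereal (X N)) \<le> ereal \<epsilon>" if e: "0 < \<epsilon>" "\<epsilon> \<le> 1/2" for \<epsilon>
  proof -
    define m where "m = (\<lambda>N. nat \<lfloor>(1 - \<epsilon>) * real N\<rfloor>)"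
    have fl0: "0 \<le> \<lfloor>(1 - \<epsilon>) * real N\<rfloor>" for N using e by simp
    have rm: "real (m N) = real_of_int \<lfloor>(1 - \<epsilon>) * real N\<rfloor>" for N
      using fl0[of N] by (simp add: m_def)
    have b1: "real (m N) \<le> (1 - \<epsilon>) * real N" for N
      unfolding rm by (rule of_int_floor_le)
    have b2: "(1 - \<epsilon>) * real N - 1 < real (m N)" for N
      unfolding rm by (rule real_of_int_floor_gt_diff_one)
    have mle: "\<forall>N. m N \<le> N"
    proof
      fix N
      have "(1 - \<epsilon>) * real N \<le> 1 * real N" using e by (intro mult_right_mono) auto
      then have "real (m N) \<le> real N" using b1[of N] by linarith
      then show "m N \<le> N" by simp
    qed
    have lb: "\<epsilon> \<le> 1 - real (m N) / real N" if "N > 0" for N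
      using b1[of N] that by (simp add: field_simps)
    have ub: "1 - real (m N) / real N \<le> \<epsilon> + 1 / real N" if "N > 0" for N
    proof -
      have "1 - real (m N) / real N = (real N - real (m N)) / real N" using that by (simp add: field_simps)
      also have "\<dots> \<le> (\<epsilon> * real N + 1) / real N"
        by (rule divide_right_mono) (use b2[of N] in \<open>auto simp: algebra_simps\<close>)
      also have "\<dots> = \<epsilon> + 1 / real N" using that by (simp add: field_simps)
      finally show ?thesis .
    qed
    have lim: "(\<lambda>N. 1 - real (m N) / real N) \<longlonglongrightarrow> \<epsilon>"
    proof (rule tendsto_sandwich[OF _ _ tendsto_const])
      show "\<forall>\<^sub>F N in sequentially. \<epsilon> \<le> 1 - real (m N) / real N"
        using eventually_gt_at_top[of 0] by eventually_elim (use lb in auto)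
      show "\<forall>\<^sub>F N in sequentially. 1 - real (m N) / real N \<le> \<epsilon> + 1 / real N"
        using eventually_gt_at_top[of 0] by eventually_elim (use ub in auto)
      show "(\<lambda>N. \<epsilon> + 1 / real N) \<longlonglongrightarrow> \<epsilon>"
        using tendsto_add[OF tendsto_const lim_1_over_n, of \<epsilon>] by simp
    qed
    have Lt2: "filterlim (\<lambda>N. ln (real N) - (1 - (1 - real (m N) / real N) / 2) * real N * a N)
              at_top sequentially"
    proof (rule filterlim_at_top_mono[OF Lt])
      show "\<forall>\<^sub>F N in sequentially. ln (real N) - real N * a N
           \<le> ln (real N) - (1 - (1 - real (m N) / real N) / 2) * real N * a N"
        using eventually_gt_at_top[of 0]
      proof eventually_elim
        case (elim N)
        have "0 \<le> 1 - real (m N) / real N" using lb[OF elim] e by linarith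
        then have "(1 - (1 - real (m N) / real N) / 2) * (real N * a N) \<le> 1 * (real N * a N)"
          using apos[of N] by (intro mult_right_mono) auto
        then show ?case by (simp add: mult.assoc)
      qed
    qed
    show ?thesis using part1(2)[OF apos mle lim _ Lt2] e by (simp add: X_def)
  qed
  have X0: "0 \<le> X N" for N
    unfolding X_def mean_n0_def using partfun_pos[OF apos, of N]
    by (intro divide_nonneg_nonneg divide_nonneg_pos infsum_nonneg) (auto simp: boltz_pos less_imp_le)
  have "limsup (\<lambda>N. ereal (X N)) \<le> ereal 0"
  proof (rule ereal_le_epsilon2)
    fix e :: real assume "0 < e"
    have "limsup (\<lambda>N. ereal (X N)) \<le> ereal (min e (1/2))"
      using ls[of "min e (1/2)"] \<open>0 < e\<close> by simp
    also have "\<dots> \<le> ereal 0 + ereal e" by simp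
    finally show "limsup (\<lambda>N. ereal (X N)) \<le> ereal 0 + ereal e" .
  qed
  moreover have "ereal 0 \<le> liminf (\<lambda>N. ereal (X N))"
    by (rule Liminf_bounded) (use X0 in simp)
  ultimately show "X \<longlonglongrightarrow> 0"
    by (intro limsup_le_liminf_real) auto
qed

end
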